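(* Let $m\in(0,2]$ and let $f(x)=\sum_{k=0}^{\infty}x^ka_k$, $a_k\in\mathbb{O}$, be a slice regular function on $\mathbb{B}$ such that $|f(x)|\le 1$ for all $x\in\mathbb{B}$. Then $$\mathcal{A}_f(x):=|a_0|^m+\sum_{k=1}^{\infty}|x^ka_k|\le 1\quad\text{for all } x\in\mathbb{B} \text{ with } |x|\le R_m:=\frac{m}{2+m}.$$ Moreover, the constant $R_m$ is best possible for each $m$: for every $r\in(R_m,1)$ there exist a slice regular $f$ on $\mathbb{B}$ with $|f|\le1$ on $\mathbb{B}$ and $x\in\mathbb{B}$ with $|x|=r$ such that $\mathcal{A}_f(x)>1$.
   Context: $\mathbb{O}$ denotes the real algebra of octonions (the 8-dimensional non-commutative, non-associative but alternative normed division algebra over $\mathbb{R}$), with modulus $|x|=\sqrt{x\overline{x}}$ equal to the Euclidean norm on $\mathbb{R}^8$; the modulus is multiplicative, $|xy|=|x||y|$. $\mathbb{B}=\{x\in\mathbb{O}:|x|<1\}$ is the open unit ball. A slice regular function on $\mathbb{B}$ is (equivalently) a function of the form $f(x)=\sum_{k=0}^{\infty}x^ka_k$ with coefficients $a_k\in\mathbb{O}$ placed on the right, the series converging for every $x\in\mathbb{B}$ (the powers $x^k$ are unambiguous since $\mathbb{O}$ is alternative). *)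

theory Defs
  imports "HOL-Analysis.Analysis"
begin

text \<open>Octonions via the Cayley--Dickson construction:
  quaternions are pairs of complex numbers, octonions are pairs of quaternions,
  with product (a,b)(c,d) = (ac - d* b, da + b c*).  The norm is the product
  norm from HOL-Analysis, i.e. the Euclidean norm on R^8.\<close>

type_synonym quat = "complex \<times> complex"
type_synonym oct = "quat \<times> quat"

definition qconj :: "quat \<Rightarrow> quat" where
  "qconj q = (cnj (fst q), - snd q)"

definition qmult :: "quat \<Rightarrow> quat \<Rightarrow> quat" where
  "qmult p q = (fst p * fst q - cnj (snd q) * snd p,
                snd q * fst p + snd p * cnj (fst q))"

definition oconj :: "oct \<Rightarrow> oct" where
  "oconj x = (qconj (fst x), - snd x)"

definition omult :: "oct \<Rightarrow> oct \<Rightarrow> oct" where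
  "omult x y = (qmult (fst x) (fst y) - qmult (qconj (snd y)) (snd x),
                qmult (snd y) (fst x) + qmult (snd x) (qconj (fst y)))"

definition oone :: oct where
  "oone = ((1, 0), (0, 0))"

primrec opow :: "oct \<Rightarrow> nat \<Rightarrow> oct" where
  "opow x 0 = oone"
| "opow x (Suc k) = omult x (opow x k)"

definition slice_series :: "(nat \<Rightarrow> oct) \<Rightarrow> oct \<Rightarrow> oct" where
  "slice_series a x = (\<Sum>k. omult (opow x k) (a k))"

definition slice_regular_ball :: "(nat \<Rightarrow> oct) \<Rightarrow> bool" where
  "slice_regular_ball a \<longleftrightarrow> (\<forall>x::oct. norm x < 1 \<longrightarrow> summable (\<lambda>k. omult (opow x k) (a k)))"

definition bohr_tail_summable :: "(nat \<Rightarrow> oct) \<Rightarrow> oct \<Rightarrow> bool" where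
  "bohr_tail_summable a x \<longleftrightarrow> summable (\<lambda>k. norm (omult (opow x (Suc k)) (a (Suc k))))"

definition bohr_sum :: "real \<Rightarrow> (nat \<Rightarrow> oct) \<Rightarrow> oct \<Rightarrow> real" where
  "bohr_sum m a x = norm (a 0) powr m + (\<Sum>k. norm (omult (opow x (Suc k)) (a (Suc k))))"

end

theory Submission
  imports Defs "HOL-Complex_Analysis.Complex_Analysis"
begin


lemma moebius_lt:
  fixes w a :: complex
  assumes "cmod w < 1" "cmod a < 1"
  shows "cmod (w - a) < cmod (1 - cnj a * w)"
proof -
  have id: "(cmod (1 - cnj a * w))^2 - (cmod (w - a))^2 = (1 - (cmod a)^2) * (1 - (cmod w)^2)"
    unfolding cmod_power2 by (simp add: algebra_simps power2_eq_square)
  have "0 < (1 - (cmod a)^2) * (1 - (cmod w)^2)"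
    using assms by (intro mult_pos_pos) (simp_all add: power_less_one_iff abs_square_less_1)
  with id have "(cmod (w - a))^2 < (cmod (1 - cnj a * w))^2" by simp
  then show ?thesis by (simp add: power2_less_imp_less)
qed

lemma schwarz_pick_coeff_strict:
  fixes d :: "nat \<Rightarrow> complex" and \<rho> :: real
  assumes S: "\<And>z. cmod z < 1 \<Longrightarrow> summable (\<lambda>n. d n * z^n)"
    and B: "\<And>z. cmod z < 1 \<Longrightarrow> cmod (\<Sum>n. d n * z^n) \<le> 1"
    and r: "0 < \<rho>" "\<rho> < 1"
  shows "\<rho> * cmod (d 1) \<le> 1 - \<rho>^2 * (cmod (d 0))^2"
proof -
  define G where "G = (\<lambda>z. \<Sum>n. d n * z^n)"
  have G0: "G 0 = d 0" by (simp add: G_def)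
  have Gder: "(G has_field_derivative (\<Sum>n. diffs d n * z^n)) (at z)" if "cmod z < 1" for z
    unfolding G_def by (rule termdiffs_strong'[of 1]) (use S that in auto)
  have Gder0: "(G has_field_derivative d 1) (at 0)"
    using Gder[of 0] by (simp add: diffs_def)
  have holG: "G holomorphic_on ball 0 1"
    unfolding holomorphic_on_def field_differentiable_def
    by (metis Gder has_field_derivative_at_within mem_ball dist_0_norm)
  have d0: "cmod (d 0) \<le> 1" using B[of 0] by simp
  define a where "a = complex_of_real \<rho> * d 0"
  have na: "cmod a < 1"
  proof -
    have "cmod a = \<rho> * cmod (d 0)" using r by (simp add: a_def norm_mult)
    also have "\<dots> \<le> \<rho>" using d0 r by (intro mult_left_le) auto
    finally show ?thesis using r by simp
  qed
  have nw: "cmod (complex_of_real \<rho> * G z) < 1" if "cmod z < 1" for z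
  proof -
    have "cmod (complex_of_real \<rho> * G z) = \<rho> * cmod (G z)" using r by (simp add: norm_mult)
    also have "\<dots> \<le> \<rho>" using B[OF that] r unfolding G_def by (intro mult_left_le) auto
    finally show ?thesis using r by simp
  qed
  define F where "F = (\<lambda>z. (complex_of_real \<rho> * G z - a) / (1 - cnj a * (complex_of_real \<rho> * G z)))"
  have den: "1 - cnj a * (complex_of_real \<rho> * G z) \<noteq> 0" if "cmod z < 1" for z
  proof
    assume "1 - cnj a * (complex_of_real \<rho> * G z) = 0"
    then have "cnj a * (complex_of_real \<rho> * G z) = 1" by simp
    then have "cmod (cnj a * (complex_of_real \<rho> * G z)) = 1" by simp
    then have "cmod a * cmod (complex_of_real \<rho> * G z) = 1" by (simp only: norm_mult complex_mod_cnj)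
    moreover have "cmod a * cmod (complex_of_real \<rho> * G z) \<le> cmod (complex_of_real \<rho> * G z)"
      using na by (intro mult_left_le_one_le) auto
    ultimately show False using nw[OF that] by simp
  qed
  have holF: "F holomorphic_on ball 0 1"
    unfolding F_def using holG den by (intro holomorphic_intros) auto
  have F0: "F 0 = 0" by (simp add: F_def G0 a_def)
  have Fl: "cmod (F z) < 1" if "cmod z < 1" for z
  proof -
    have "cmod (complex_of_real \<rho> * G z - a) < cmod (1 - cnj a * (complex_of_real \<rho> * G z))"
      by (rule moebius_lt[OF nw[OF that] na])
    then show ?thesis using den[OF that] by (simp add: F_def norm_divide divide_less_eq)
  qed
  have "cmod (deriv F 0) \<le> 1"
    using Schwarz_Lemma(2)[OF holF F0 Fl, of 0] by simp
  have "(F has_field_derivative complex_of_real \<rho> * d 1 / (1 - cnj a * a)) (at 0)"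
  proof -
    have "(F has_field_derivative
       ((complex_of_real \<rho> * d 1) * (1 - cnj a * (complex_of_real \<rho> * G 0)) +
        (complex_of_real \<rho> * G 0 - a) * (cnj a * (complex_of_real \<rho> * d 1))) /
        (1 - cnj a * (complex_of_real \<rho> * G 0))^2) (at 0)"
      unfolding F_def
      using den[of 0] by (auto intro!: derivative_eq_intros Gder0 simp: power2_eq_square)
    moreover have "1 - cnj a * a \<noteq> 0" using den[of 0] by (simp add: G0 a_def)
    ultimately show ?thesis by (simp add: G0 a_def[symmetric] power2_eq_square)
  qed
  then have "deriv F 0 = complex_of_real \<rho> * d 1 / (1 - cnj a * a)"
    by (rule DERIV_imp_deriv)
  moreover have "cnj a * a = complex_of_real ((cmod a)^2)"
    by (subst complex_norm_square) (rule mult.commute)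
  ultimately have D: "deriv F 0 = complex_of_real \<rho> * d 1 / complex_of_real (1 - (cmod a)^2)"
    by simp
  have pos: "0 < 1 - (cmod a)^2" using na by (simp add: abs_square_less_1)
  have "cmod (deriv F 0) = \<rho> * cmod (d 1) / (1 - (cmod a)^2)"
    unfolding D norm_divide norm_mult norm_of_real using r pos by simp
  with \<open>cmod (deriv F 0) \<le> 1\<close> have "\<rho> * cmod (d 1) / (1 - (cmod a)^2) \<le> 1"
    by simp
  then have "\<rho> * cmod (d 1) \<le> 1 - (cmod a)^2" using pos by (simp add: divide_le_eq)
  moreover have "(cmod a)^2 = \<rho>^2 * (cmod (d 0))^2"
    using r by (simp add: a_def norm_mult power_mult_distrib)
  ultimately show ?thesis by simp
qed

lemma schwarz_pick_coeff:
  fixes d :: "nat \<Rightarrow> complex"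
  assumes S: "\<And>z. cmod z < 1 \<Longrightarrow> summable (\<lambda>n. d n * z^n)"
    and B: "\<And>z. cmod z < 1 \<Longrightarrow> cmod (\<Sum>n. d n * z^n) \<le> 1"
  shows "cmod (d 1) \<le> 1 - (cmod (d 0))^2"
proof -
  have "((\<lambda>\<rho>. \<rho> * cmod (d 1) + \<rho>^2 * (cmod (d 0))^2) \<longlongrightarrow> 1 * cmod (d 1) + 1^2 * (cmod (d 0))^2) (at_left (1::real))"
    by (intro tendsto_intros)
  moreover have "eventually (\<lambda>\<rho>. \<rho> * cmod (d 1) + \<rho>^2 * (cmod (d 0))^2 \<le> 1) (at_left (1::real))"
  proof -
    have ev: "eventually (\<lambda>x. x \<in> {0<..<(1::real)}) (at_left 1)"
      by (rule eventually_at_left_real) simp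
    show ?thesis using ev
    proof (rule eventually_mono)
      fix \<rho> :: real assume "\<rho> \<in> {0<..<1}"
      then have "\<rho> * cmod (d 1) \<le> 1 - \<rho>^2 * (cmod (d 0))^2"
        by (intro schwarz_pick_coeff_strict[OF S B]) auto
      then show "\<rho> * cmod (d 1) + \<rho>^2 * (cmod (d 0))^2 \<le> 1" by linarith
    qed
  qed
  ultimately have "1 * cmod (d 1) + 1^2 * (cmod (d 0))^2 \<le> 1"
    by (rule tendsto_upperbound) simp
  then show ?thesis by simp
qed


lemma roots_sum:
  fixes k n :: nat
  assumes k: "k > 0"
  defines "\<omega> \<equiv> cis (2 * pi / real k)"
  shows "(\<Sum>j<k. (\<omega> ^ j) ^ n) = (if k dvd n then of_nat k else 0)"
proof -
  have wk: "\<omega> ^ k = 1"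
  proof -
    have "\<omega> ^ k = cis (real k * (2 * pi / real k))" unfolding \<omega>_def by (rule Complex.DeMoivre)
    also have "real k * (2 * pi / real k) = 2 * pi" using k by simp
    finally show ?thesis by simp
  qed
  have wn: "\<omega> ^ n = \<omega> ^ (n mod k)"
  proof -
    have "\<omega> ^ n = \<omega> ^ (k * (n div k) + n mod k)" by simp
    also have "\<dots> = (\<omega> ^ k) ^ (n div k) * \<omega> ^ (n mod k)" by (simp only: power_add power_mult)
    finally show ?thesis by (simp add: wk)
  qed
  have eq: "(\<omega> ^ j) ^ n = (\<omega> ^ n) ^ j" for j by (simp add: power_mult[symmetric] mult.commute)
  show ?thesis
  proof (cases "k dvd n")
    case True
    then have "\<omega> ^ n = 1" using wn by simp
    then show ?thesis using True by (simp add: eq)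
  next
    case False
    have inj: "inj_on (\<lambda>j. cis (2 * pi * real j / real k)) {..<k}"
      using Complex.bij_betw_roots_unity[OF k] by (simp add: bij_betw_def)
    have "n mod k < k" "0 < k" using k by simp_all
    moreover have "n mod k \<noteq> 0" using False by (simp add: dvd_eq_mod_eq_0)
    ultimately have "cis (2 * pi * real (n mod k) / real k) \<noteq> cis (2 * pi * real 0 / real k)"
      using inj_onD[OF inj] by (metis lessThan_iff)
    moreover have "\<omega> ^ (n mod k) = cis (2 * pi * real (n mod k) / real k)"
      unfolding \<omega>_def Complex.DeMoivre by (simp add: field_simps)
    ultimately have ne: "\<omega> ^ n \<noteq> 1"
      using wn by simp
    have "(\<omega> ^ n) ^ k = (\<omega> ^ k) ^ n" by (simp add: power_mult[symmetric] mult.commute)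
    then have "(\<omega> ^ n) ^ k = 1" by (simp add: wk)
    then have "(\<Sum>j<k. (\<omega> ^ n) ^ j) = 0" using ne by (simp add: geometric_sum)
    then show ?thesis using False by (simp add: eq)
  qed
qed

lemma wiener_coeff:
  fixes c :: "nat \<Rightarrow> complex" and k :: nat
  assumes S: "\<And>z. cmod z < 1 \<Longrightarrow> summable (\<lambda>n. c n * z^n)"
    and B: "\<And>z. cmod z < 1 \<Longrightarrow> cmod (\<Sum>n. c n * z^n) \<le> 1"
    and k: "k \<ge> 1"
  shows "cmod (c k) \<le> 1 - (cmod (c 0))^2"
proof -
  define d where "d = (\<lambda>m. c (m * k))"
  define \<omega> where "\<omega> = cis (2 * pi / real k)"
  have kpos: "k > 0" using k by simp
  have main: "(\<lambda>m. d m * w^m) sums ((\<Sum>j<k. (\<Sum>n. c n * (\<omega>^j * z)^n)) / of_nat k)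
        \<and> cmod ((\<Sum>j<k. (\<Sum>n. c n * (\<omega>^j * z)^n)) / of_nat k) \<le> 1"
    if z: "cmod z < 1" and w: "w = z ^ k" for z w
  proof
    have nw: "cmod (\<omega>^j * z) < 1" for j using z by (simp add: \<omega>_def norm_mult norm_power)
    have "(\<lambda>n. \<Sum>j<k. c n * (\<omega>^j * z)^n) sums (\<Sum>j<k. (\<Sum>n. c n * (\<omega>^j * z)^n))"
      by (intro sums_sum summable_sums S nw)
    moreover have "(\<Sum>j<k. c n * (\<omega>^j * z)^n) = (if k dvd n then of_nat k * (c n * z^n) else 0)" for n
    proof -
      have "(\<Sum>j<k. c n * (\<omega>^j * z)^n) = c n * z^n * (\<Sum>j<k. (\<omega>^j)^n)"
        by (simp add: sum_distrib_left power_mult_distrib algebra_simps)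
      also have "\<dots> = c n * z^n * (if k dvd n then of_nat k else 0)"
        using roots_sum[OF kpos, of n] by (simp add: \<omega>_def)
      finally show ?thesis by simp
    qed
    ultimately have "(\<lambda>n. if k dvd n then of_nat k * (c n * z^n) else 0) sums (\<Sum>j<k. (\<Sum>n. c n * (\<omega>^j * z)^n))"
      by simp
    then have "(\<lambda>n. (if k dvd n then of_nat k * (c n * z^n) else 0) / of_nat k) sums ((\<Sum>j<k. (\<Sum>n. c n * (\<omega>^j * z)^n)) / of_nat k)"
      by (rule sums_divide)
    moreover have "(\<lambda>n. (if k dvd n then of_nat k * (c n * z^n) else 0) / of_nat k) = (\<lambda>n. if k dvd n then c n * z^n else 0)"
      using kpos by (auto simp: fun_eq_iff)
    ultimately have s1: "(\<lambda>n. if k dvd n then c n * z^n else 0) sums ((\<Sum>j<k. (\<Sum>n. c n * (\<omega>^j * z)^n)) / of_nat k)"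
      by simp
    have sm: "strict_mono (\<lambda>m::nat. m * k)" using kpos by (intro strict_monoI) simp
    have "(\<lambda>m. (\<lambda>n. if k dvd n then c n * z^n else 0) (m * k)) sums ((\<Sum>j<k. (\<Sum>n. c n * (\<omega>^j * z)^n)) / of_nat k)"
      by (subst sums_mono_reindex[OF sm]) (use s1 in \<open>auto simp: dvd_def mult.commute\<close>)
    moreover have "(\<lambda>m. (\<lambda>n. if k dvd n then c n * z^n else 0) (m * k)) = (\<lambda>m. d m * w^m)"
      by (auto simp: fun_eq_iff d_def w power_mult[symmetric] mult.commute)
    ultimately show "(\<lambda>m. d m * w^m) sums ((\<Sum>j<k. (\<Sum>n. c n * (\<omega>^j * z)^n)) / of_nat k)" by simp
    have "cmod (\<Sum>j<k. (\<Sum>n. c n * (\<omega>^j * z)^n)) \<le> (\<Sum>j<k. cmod (\<Sum>n. c n * (\<omega>^j * z)^n))"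
      by (rule norm_sum)
    also have "\<dots> \<le> (\<Sum>j<k. 1)" by (intro sum_mono B nw)
    finally show "cmod ((\<Sum>j<k. (\<Sum>n. c n * (\<omega>^j * z)^n)) / of_nat k) \<le> 1"
      using kpos by (simp add: norm_divide divide_le_eq)
  qed
  have root: "\<exists>z. cmod z < 1 \<and> z ^ k = w" if w: "cmod w < 1" for w
  proof (cases "w = 0")
    case True then show ?thesis using kpos by (intro exI[of _ 0]) simp
  next
    case False
    define z where "z = rcis (root k (cmod w)) (Arg w / real k)"
    have "z ^ k = rcis (root k (cmod w) ^ k) (real k * (Arg w / real k))"
      unfolding z_def by (rule DeMoivre2)
    also have "root k (cmod w) ^ k = cmod w" using kpos by (simp add: real_root_pow_pos2)
    also have "real k * (Arg w / real k) = Arg w" using kpos by simp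
    finally have z: "z ^ k = w" by (simp add: rcis_cmod_Arg)
    have "cmod z < 1"
    proof (rule ccontr)
      assume "\<not> cmod z < 1"
      then have "1 \<le> cmod z ^ k" by (simp add: one_le_power)
      moreover have "cmod w = cmod z ^ k" using z norm_power[of z k] by simp
      ultimately show False using w by linarith
    qed
    then show ?thesis using z by blast
  qed
  have Sd: "summable (\<lambda>m. d m * w^m)" and Bd: "cmod (\<Sum>m. d m * w^m) \<le> 1" if wl: "cmod w < 1" for w
  proof -
    obtain z where "cmod z < 1" "z ^ k = w" using root[OF wl] by blast
    then show "summable (\<lambda>m. d m * w^m)" "cmod (\<Sum>m. d m * w^m) \<le> 1"
      using main[of z w] by (auto simp: sums_iff)
  qed
  have "cmod (d 1) \<le> 1 - (cmod (d 0))^2" by (rule schwarz_pick_coeff[OF Sd Bd])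
  then show ?thesis by (simp add: d_def)
qed



definition O8 :: "real\<Rightarrow>real\<Rightarrow>real\<Rightarrow>real\<Rightarrow>real\<Rightarrow>real\<Rightarrow>real\<Rightarrow>real\<Rightarrow>oct" where
 "O8 a b c d e f g h = ((Complex a b, Complex c d), (Complex e f, Complex g h))"

lemma O8_ex: "\<exists>a b c d e f g h. x = O8 a b c d e f g h"
  unfolding O8_def by (metis complex.exhaust prod.exhaust)

lemma omult_O8: "omult (O8 a b c d e f g h) (O8 a' b' c' d' e' f' g' h') = O8
(a*a' -b*b' -c*c' -d*d' -e*e' -f*f' -g*g' -h*h')
(a*b' +a'*b +c*d' -c'*d +e*f' -e'*f -g*h' +g'*h)
(a*c' +a'*c -b*d' +b'*d +e*g' -e'*g +f*h' -f'*h)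
(a*d' +a'*d +b*c' -b'*c +e*h' -e'*h -f*g' +f'*g)
(a*e' +a'*e -b*f' +b'*f -c*g' +c'*g -d*h' +d'*h)
(a*f' +a'*f +b*e' -b'*e -c*h' +c'*h +d*g' -d'*g)
(a*g' +a'*g +b*h' -b'*h +c*e' -c'*e -d*f' +d'*f)
(a*h' +a'*h -b*g' +b'*g +c*f' -c'*f +d*e' -d'*e)"
  by (simp add: O8_def omult_def qmult_def qconj_def complex_eq_iff algebra_simps)

lemma norm_O8: "norm (O8 a b c d e f g h) = sqrt (a^2+b^2+c^2+d^2+e^2+f^2+g^2+h^2)"
  by (simp add: O8_def norm_prod_def cmod_def add.assoc)

lemma normsq_O8: "(norm (O8 a b c d e f g h))^2 = a^2+b^2+c^2+d^2+e^2+f^2+g^2+h^2"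
  by (simp add: norm_O8)

lemma inner_O8: "inner (O8 a b c d e f g h) (O8 a' b' c' d' e' f' g' h') = a*a'+b*b'+c*c'+d*d'+e*e'+f*f'+g*g'+h*h'"
  by (simp add: O8_def inner_prod_def inner_complex_def add.assoc)

lemma O8_eq: "O8 a b c d e f g h = O8 a' b' c' d' e' f' g' h' \<longleftrightarrow>
   a=a' \<and> b=b' \<and> c=c' \<and> d=d' \<and> e=e' \<and> f=f' \<and> g=g' \<and> h=h'"
  by (simp add: O8_def)

lemma O8_add: "O8 a b c d e f g h + O8 a' b' c' d' e' f' g' h' = O8 (a+a') (b+b') (c+c') (d+d') (e+e') (f+f') (g+g') (h+h')"
  by (simp add: O8_def complex_eq_iff)
lemma O8_diff: "O8 a b c d e f g h - O8 a' b' c' d' e' f' g' h' = O8 (a-a') (b-b') (c-c') (d-d') (e-e') (f-f') (g-g') (h-h')"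
  by (simp add: O8_def complex_eq_iff)
lemma O8_scale: "r *\<^sub>R O8 a b c d e f g h = O8 (r*a) (r*b) (r*c) (r*d) (r*e) (r*f) (r*g) (r*h)"
  by (simp add: O8_def complex_eq_iff)
lemma O8_uminus: "- O8 a b c d e f g h = O8 (-a) (-b) (-c) (-d) (-e) (-f) (-g) (-h)"
  by (simp add: O8_def complex_eq_iff)
lemma O8_zero: "0 = O8 0 0 0 0 0 0 0 0"
  by (simp add: O8_def complex_eq_iff zero_prod_def)
lemma oone_O8: "oone = O8 1 0 0 0 0 0 0 0"
  by (simp add: O8_def oone_def complex_eq_iff)
lemma oconj_O8: "oconj (O8 a b c d e f g h) = O8 a (-b) (-c) (-d) (-e) (-f) (-g) (-h)"
  by (simp add: O8_def oconj_def qconj_def complex_eq_iff)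

lemmas O8_simps = omult_O8 inner_O8 O8_eq O8_add O8_diff O8_scale O8_uminus oone_O8 oconj_O8

lemma omult_add_left: "omult (x + y) z = omult x z + omult y z"
  using O8_ex[of x] O8_ex[of y] O8_ex[of z] by (auto simp: O8_simps algebra_simps)
lemma omult_add_right: "omult z (x + y) = omult z x + omult z y"
  using O8_ex[of x] O8_ex[of y] O8_ex[of z] by (auto simp: O8_simps algebra_simps)
lemma omult_scale_left: "omult (r *\<^sub>R x) z = r *\<^sub>R omult x z"
  using O8_ex[of x] O8_ex[of z] by (auto simp: O8_simps algebra_simps)
lemma omult_scale_right: "omult z (r *\<^sub>R x) = r *\<^sub>R omult z x"
  using O8_ex[of x] O8_ex[of z] by (auto simp: O8_simps algebra_simps)

lemma nsq: "(a*a' -b*b' -c*c' -d*d' -e*e' -f*f' -g*g' -h*h')^2 +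
(a*b' +a'*b +c*d' -c'*d +e*f' -e'*f -g*h' +g'*h)^2 +
(a*c' +a'*c -b*d' +b'*d +e*g' -e'*g +f*h' -f'*h)^2 +
(a*d' +a'*d +b*c' -b'*c +e*h' -e'*h -f*g' +f'*g)^2 +
(a*e' +a'*e -b*f' +b'*f -c*g' +c'*g -d*h' +d'*h)^2 +
(a*f' +a'*f +b*e' -b'*e -c*h' +c'*h +d*g' -d'*g)^2 +
(a*g' +a'*g +b*h' -b'*h +c*e' -c'*e -d*f' +d'*f)^2 +
(a*h' +a'*h -b*g' +b'*g +c*f' -c'*f +d*e' -d'*e)^2 = 
 (a^2+b^2+c^2+d^2+e^2+f^2+g^2+h^2) * (a'^2+b'^2+c'^2+d'^2+e'^2+f'^2+g'^2+h'^2)" for a b c d e f g h a' b' c' d' e' f' g' h' :: real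
  by algebra

lemma norm_omult: "norm (omult x y) = norm x * norm y"
proof -
  obtain a b c d e f g h where x: "x = O8 a b c d e f g h" using O8_ex by blast
  obtain a' b' c' d' e' f' g' h' where y: "y = O8 a' b' c' d' e' f' g' h'" using O8_ex by blast
  show ?thesis unfolding x y omult_O8 norm_O8 nsq by (simp add: real_sqrt_mult)
qed

lemma omult_oone_left [simp]: "omult oone x = x"
  using O8_ex[of x] by (auto simp: O8_simps)
lemma omult_oone_right [simp]: "omult x oone = x"
  using O8_ex[of x] by (auto simp: O8_simps)
lemma norm_oone [simp]: "norm oone = 1"
  by (simp add: oone_O8 norm_O8)
lemma inner_oone_oone [simp]: "inner oone oone = 1"
  by (simp add: oone_O8 inner_O8)

lemma omult_imag_sq: "inner I oone = 0 \<Longrightarrow> omult I I = - ((norm I)^2 *\<^sub>R oone)"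
proof -
  assume h: "inner I oone = 0"
  obtain a b c d e f g k where u: "I = O8 a b c d e f g k" using O8_ex by blast
  with h have "a = 0" by (simp add: O8_simps)
  then show ?thesis unfolding u normsq_O8 by (simp add: O8_simps power2_eq_square)
qed

lemma inner_imag_skew: "inner I oone = 0 \<Longrightarrow> inner (omult I x) y = - inner x (omult I y)"
  using O8_ex[of I] O8_ex[of x] O8_ex[of y] by (auto simp: O8_simps algebra_simps)

lemma omult_right_alt: "omult (omult b (oconj u)) u = (norm u)^2 *\<^sub>R b"
proof -
  obtain a c d e f g h k where u: "u = O8 a c d e f g h k" using O8_ex by blast
  obtain a' c' d' e' f' g' h' k' where b: "b = O8 a' c' d' e' f' g' h' k'" using O8_ex by blast
  show ?thesis unfolding u b by (simp add: O8_simps normsq_O8, algebra)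
qed

lemma norm_oconj [simp]: "norm (oconj u) = norm u"
  using O8_ex[of u] by (auto simp: O8_simps norm_O8)


lemma bb_omult: "bounded_bilinear omult"
proof
  show "omult (a + a') b = omult a b + omult a' b" for a a' b by (rule omult_add_left)
  show "omult a (b + b') = omult a b + omult a b'" for a b b' by (rule omult_add_right)
  show "omult (r *\<^sub>R a) b = r *\<^sub>R omult a b" for r a b by (rule omult_scale_left)
  show "omult a (r *\<^sub>R b) = r *\<^sub>R omult a b" for r a b by (rule omult_scale_right)
  show "\<exists>K. \<forall>a b. norm (omult a b) \<le> norm a * norm b * K"
    by (rule exI[of _ 1]) (simp add: norm_omult)
qed

lemma omult_zero_left [simp]: "omult 0 x = 0"
  using bounded_bilinear.zero_left[OF bb_omult] .
lemma omult_zero_right [simp]: "omult x 0 = 0"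
  using bounded_bilinear.zero_right[OF bb_omult] .

lemma norm_opow: "norm (opow x n) = norm x ^ n"
  by (induction n) (simp_all add: norm_omult)

definition oimu :: "oct \<Rightarrow> bool" where
  "oimu I \<longleftrightarrow> inner I oone = 0 \<and> norm I = 1"

definition oemb :: "oct \<Rightarrow> complex \<Rightarrow> oct" where
  "oemb I z = Re z *\<^sub>R oone + Im z *\<^sub>R I"

lemma emb_mult: "oimu I \<Longrightarrow> oemb I (z * w) = omult (oemb I z) (oemb I w)"
  using omult_imag_sq[of I]
  by (simp add: oimu_def oemb_def omult_add_left omult_add_right omult_scale_left omult_scale_right
      algebra_simps)

lemma emb_one [simp]: "oemb I 1 = oone"
  by (simp add: oemb_def)

lemma opow_emb: "oimu I \<Longrightarrow> opow (oemb I z) n = oemb I (z ^ n)"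
  by (induction n) (simp_all add: emb_mult)

lemma norm_emb: "oimu I \<Longrightarrow> norm (oemb I z) = cmod z"
proof -
  assume h: "oimu I"
  have II: "inner I I = 1" using h by (simp add: oimu_def dot_square_norm)
  have "inner (oemb I z) (oemb I z) = (Re z)^2 + (Im z)^2"
    using h II unfolding oemb_def
    by (simp add: oimu_def inner_add_left inner_add_right inner_commute power2_eq_square)
  moreover have "norm (oemb I z) = sqrt (inner (oemb I z) (oemb I z))" by (rule norm_eq_sqrt_inner)
  ultimately show ?thesis by (simp add: cmod_def)
qed

lemma emb_add: "oemb I (z + w) = oemb I z + oemb I w"
  by (simp add: oemb_def algebra_simps)
lemma emb_of_real: "oemb I (of_real r) = r *\<^sub>R oone"
  by (simp add: oemb_def)
lemma bl_emb: "bounded_linear (oemb I)"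
  unfolding oemb_def
  by (intro bounded_linear_add bounded_linear_compose[OF bounded_linear_scaleR_left] bounded_linear_Re bounded_linear_Im)

lemma imu_exists: "oimu ((Complex 0 1, 0), (0, 0))"
  by (simp add: oimu_def oone_def inner_prod_def inner_complex_def norm_prod_def cmod_def)

lemma oct_decomp: "\<exists>I z. oimu I \<and> c = oemb I z"
proof -
  define r where "r = inner c oone"
  define v where "v = c - r *\<^sub>R oone"
  have v1: "inner v oone = 0" by (simp add: v_def r_def inner_diff_left)
  show ?thesis
  proof (cases "v = 0")
    case True
    then have "c = r *\<^sub>R oone" by (simp add: v_def)
    then show ?thesis using imu_exists
      by (intro exI[of _ "((Complex 0 1, 0), (0, 0))"] exI[of _ "of_real r"])
         (simp add: emb_of_real)
  next
    case False
    define I where "I = (1 / norm v) *\<^sub>R v"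
    have "oimu I" using False v1 by (simp add: oimu_def I_def)
    moreover have "c = oemb I (Complex r (norm v))"
      using False by (simp add: oemb_def I_def v_def)
    ultimately show ?thesis by blast
  qed
qed

lemma inner_imag_iso: "norm I = 1 \<Longrightarrow> inner (omult I x) (omult I y) = inner x y"
proof -
  assume h: "norm I = 1"
  have "(norm (omult I (x + y)))^2 = (norm (x+y))^2" by (simp add: norm_omult h)
  moreover have "(norm (omult I x))^2 = (norm x)^2" "(norm (omult I y))^2 = (norm y)^2"
    by (simp_all add: norm_omult h)
  ultimately show ?thesis
    unfolding power2_norm_eq_inner omult_add_right
    by (simp add: inner_add_left inner_add_right inner_commute)
qed

definition ophi :: "oct \<Rightarrow> oct \<Rightarrow> oct \<Rightarrow> complex" where
  "ophi I u x = Complex (inner x u) (inner x (omult I u))"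

lemma bl_phi: "bounded_linear (ophi I u)"
proof -
  have "ophi I u = (\<lambda>x. of_real (inner x u) + \<i> * of_real (inner x (omult I u)))"
    by (auto simp: ophi_def complex_eq_iff)
  moreover have "bounded_linear \<dots>"
    by (intro bounded_linear_add bounded_linear_compose[OF bounded_linear_mult_right]
       bounded_linear_compose[OF bounded_linear_of_real] bounded_linear_inner_left)
  ultimately show ?thesis by simp
qed

lemma phi_emb_mult: "oimu I \<Longrightarrow> ophi I u (omult (oemb I z) x) = z * ophi I u x"
proof -
  assume h: "oimu I"
  have "omult (oemb I z) x = Re z *\<^sub>R x + Im z *\<^sub>R omult I x"
    by (simp add: oemb_def omult_add_left omult_scale_left)
  moreover have "inner (omult I x) u = - inner x (omult I u)"
    using h by (simp add: oimu_def inner_imag_skew)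
  moreover have "inner (omult I x) (omult I u) = inner x u"
    using h by (simp add: oimu_def inner_imag_iso)
  ultimately show ?thesis
    by (simp add: ophi_def complex_eq_iff inner_add_left algebra_simps)
qed

lemma phi_self: "oimu I \<Longrightarrow> norm u = 1 \<Longrightarrow> ophi I u u = 1"
proof -
  assume h: "oimu I" "norm u = 1"
  have "inner u (omult I u) = - inner u (omult I u)"
    using inner_imag_skew[of I u u] h by (simp add: oimu_def inner_commute)
  then have "inner u (omult I u) = 0" by simp
  then show ?thesis using h by (simp add: ophi_def complex_eq_iff dot_square_norm)
qed

lemma norm_phi: "oimu I \<Longrightarrow> norm u = 1 \<Longrightarrow> cmod (ophi I u x) \<le> norm x"
proof -
  assume h: "oimu I" "norm u = 1"
  define v where "v = omult I u"
  have nv: "norm v = 1" using h by (simp add: v_def norm_omult oimu_def)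
  have uv: "inner u v = 0"
  proof -
    have "inner u (omult I u) = - inner u (omult I u)"
      using inner_imag_skew[of I u u] h by (simp add: oimu_def inner_commute)
    then show ?thesis by (simp add: v_def)
  qed
  define p where "p = inner x u"
  define q where "q = inner x v"
  have uu: "inner u u = 1" "inner v v = 1" using h nv by (simp_all add: dot_square_norm)
  have "0 \<le> inner (x - p *\<^sub>R u - q *\<^sub>R v) (x - p *\<^sub>R u - q *\<^sub>R v)" by simp
  also have "\<dots> = inner x x - p^2 - q^2"
    using uu uv
    by (simp add: inner_diff_left inner_diff_right inner_commute p_def q_def
        power2_eq_square algebra_simps)
  finally have "p^2 + q^2 \<le> (norm x)^2" by (simp add: dot_square_norm)
  moreover have "(cmod (ophi I u x))^2 = p^2 + q^2"
    by (simp add: ophi_def cmod_power2 p_def q_def v_def)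
  ultimately have "(cmod (ophi I u x))^2 \<le> (norm x)^2" by simp
  then show ?thesis by (simp add: power2_le_iff_abs_le)
qed


lemma slice_series_0: "slice_series a 0 = a 0"
proof -
  have "(\<lambda>n. omult (opow 0 n) (a n)) = (\<lambda>n. if n = 0 then a 0 else 0)"
    by (rule ext) (case_tac n, simp_all)
  then show ?thesis unfolding slice_series_def
    using sums_single[of 0 "\<lambda>_. a 0"] by (simp add: sums_iff)
qed

lemma series_emb:
  assumes SR: "slice_regular_ball a" and I: "oimu I" and z: "cmod z < 1"
  shows "(\<lambda>n. omult (oemb I (z ^ n)) (a n)) sums slice_series a (oemb I z)"
proof -
  have "norm (oemb I z) < 1" using norm_emb[OF I] z by simp
  then have "summable (\<lambda>n. omult (opow (oemb I z) n) (a n))"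
    using SR unfolding slice_regular_ball_def by blast
  then show ?thesis unfolding slice_series_def by (simp add: opow_emb[OF I] summable_sums)
qed

lemma coef_bound:
  assumes SR: "slice_regular_ball a"
    and BD: "\<forall>x. norm x < 1 \<longrightarrow> norm (slice_series a x) \<le> 1"
    and k: "k \<ge> 1"
  shows "norm (a k) \<le> 1 - (norm (a 0))^2"
proof -
  obtain u where nu: "norm u = 1" and a0u: "a 0 = norm (a 0) *\<^sub>R u"
  proof (cases "a 0 = 0")
    case True then show ?thesis using that[of oone] by simp
  next
    case False then show ?thesis using that[of "(1 / norm (a 0)) *\<^sub>R a 0"] by simp
  qed
  define c where "c = omult (a k) (oconj u)"
  have cu: "omult c u = a k" unfolding c_def omult_right_alt nu by simp
  obtain I \<gamma> where I: "oimu I" and c\<gamma>: "c = oemb I \<gamma>" using oct_decomp by blast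
  have "norm c = norm (a k)" by (simp add: c_def norm_omult nu)
  then have n\<gamma>: "cmod \<gamma> = norm (a k)"
    using norm_emb[OF I, of \<gamma>] c\<gamma> by simp
  define cc where "cc = (\<lambda>n. ophi I u (a n))"
  have blp: "bounded_linear (ophi I u)" by (rule bl_phi)
  have sm: "(\<lambda>n. cc n * z^n) sums ophi I u (slice_series a (oemb I z))" if z: "cmod z < 1" for z
  proof -
    have "(\<lambda>n. ophi I u (omult (oemb I (z ^ n)) (a n))) sums ophi I u (slice_series a (oemb I z))"
      by (rule bounded_linear.sums[OF blp series_emb[OF SR I z]])
    then show ?thesis by (simp add: phi_emb_mult[OF I] cc_def mult.commute)
  qed
  have S: "summable (\<lambda>n. cc n * z^n)" if "cmod z < 1" for z
    using sm[OF that] by (rule sums_summable)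
  have B: "cmod (\<Sum>n. cc n * z^n) \<le> 1" if z: "cmod z < 1" for z
  proof -
    have "cmod (\<Sum>n. cc n * z^n) = cmod (ophi I u (slice_series a (oemb I z)))"
      using sm[OF z] by (simp add: sums_iff)
    also have "\<dots> \<le> norm (slice_series a (oemb I z))" by (rule norm_phi[OF I nu])
    also have "\<dots> \<le> 1" using BD[rule_format, of "oemb I z"] norm_emb[OF I, of z] z by simp
    finally show ?thesis .
  qed
  have W: "cmod (cc k) \<le> 1 - (cmod (cc 0))^2" by (rule wiener_coeff[OF S B k])
  have "cc 0 = of_real (norm (a 0))"
    unfolding cc_def by (subst a0u) (simp add: linear.scaleR[OF bounded_linear.linear[OF blp]] phi_self[OF I nu] scaleR_conv_of_real)
  moreover have "cc k = \<gamma>"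
    unfolding cc_def by (subst cu[symmetric]) (simp add: c\<gamma> phi_emb_mult[OF I] phi_self[OF I nu])
  ultimately show ?thesis using W n\<gamma> by simp
qed

lemma bohr_scalar:
  fixes m t r :: real
  assumes m: "0 < m" "m \<le> 2" and t: "0 \<le> t" "t \<le> 1" and r: "0 \<le> r" "r < 1" "r \<le> m / (2 + m)"
  shows "t powr m + (1 - t^2) * (r / (1 - r)) \<le> 1"
proof -
  have "r * (2 + m) \<le> m" using r m by (simp add: le_divide_eq)
  then have "r / (1 - r) \<le> m / 2" using r by (simp add: divide_le_eq field_simps)
  moreover have "0 \<le> 1 - t^2" using t by (simp add: power_le_one)
  ultimately have A: "(1 - t^2) * (r / (1 - r)) \<le> (1 - t^2) * (m / 2)" by (rule mult_left_mono)
  have "t powr m \<le> 1 - (1 - t^2) * (m/2)"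
  proof (cases "t = 0")
    case True then show ?thesis using m by simp
  next
    case False
    then have tp: "t > 0" using t by simp
    have "(t^2) powr (m/2) * 1 powr (1 - m/2) \<le> (m/2) * t^2 + (1 - m/2) * 1"
      by (rule Youngs_inequality_0) (use m tp in auto)
    moreover have "(t^2) powr (m/2) = t powr m"
    proof -
      have "t^2 = t powr 2" using tp by (simp add: powr_realpow)
      then have "(t^2) powr (m/2) = t powr (2 * (m/2))" by (simp add: powr_powr)
      then show ?thesis by simp
    qed
    ultimately show ?thesis by (simp add: algebra_simps)
  qed
  with A show ?thesis by linarith
qed

lemma part1:
  fixes m :: real
  assumes m: "0 < m" "m \<le> 2"
    and SR: "slice_regular_ball a"
    and BD: "\<forall>x. norm x < 1 \<longrightarrow> norm (slice_series a x) \<le> 1"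
    and x: "norm x < 1" "norm x \<le> m / (2 + m)"
  shows "bohr_tail_summable a x \<and> bohr_sum m a x \<le> 1"
proof -
  define r where "r = norm x"
  define t where "t = norm (a 0)"
  have "norm (slice_series a 0) \<le> 1" using BD[rule_format, of 0] by simp
  then have t1: "t \<le> 1" using slice_series_0[of a] by (simp add: t_def)
  have cb: "norm (a (Suc k)) \<le> 1 - t^2" for k using coef_bound[OF SR BD, of "Suc k"] by (simp add: t_def)
  have eqn: "norm (omult (opow x (Suc k)) (a (Suc k))) = r ^ Suc k * norm (a (Suc k))" for k
    by (simp add: norm_omult norm_opow r_def)
  have le: "norm (omult (opow x (Suc k)) (a (Suc k))) \<le> (1 - t^2) * r ^ Suc k" for k
  proof -
    have "0 \<le> r ^ Suc k" by (simp add: r_def)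
    then have "r ^ Suc k * norm (a (Suc k)) \<le> r ^ Suc k * (1 - t^2)" by (rule mult_left_mono[OF cb[of k]])
    then show ?thesis unfolding eqn by (subst mult.commute[of "1 - t^2"])
  qed
  have geo: "(\<lambda>k. (1 - t^2) * r ^ Suc k) sums ((1 - t^2) * (r / (1 - r)))"
  proof -
    have "(\<lambda>k. r ^ k) sums (1 / (1 - r))" using x by (intro geometric_sums) (simp add: r_def)
    then have "(\<lambda>k. r * r ^ k) sums (r * (1 / (1 - r)))" by (rule sums_mult)
    then have "(\<lambda>k. (1 - t^2) * (r * r ^ k)) sums ((1 - t^2) * (r * (1 / (1 - r))))" by (rule sums_mult)
    then show ?thesis by simp
  qed
  have summ: "summable (\<lambda>k. norm (omult (opow x (Suc k)) (a (Suc k))))"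
    by (rule summable_comparison_test[OF _ sums_summable[OF geo]]) (use le in auto)
  have "(\<Sum>k. norm (omult (opow x (Suc k)) (a (Suc k)))) \<le> (\<Sum>k. (1 - t^2) * r ^ Suc k)"
    by (rule suminf_le[OF le summ sums_summable[OF geo]])
  also have "\<dots> = (1 - t^2) * (r / (1 - r))" using geo by (simp add: sums_iff)
  finally have "bohr_sum m a x \<le> t powr m + (1 - t^2) * (r / (1 - r))"
    by (simp add: bohr_sum_def t_def)
  also have "\<dots> \<le> 1" using bohr_scalar[OF m, of t r] t1 x by (simp add: t_def r_def)
  finally show ?thesis using summ by (simp add: bohr_tail_summable_def)
qed


lemma exists_t:
  fixes m r :: real
  assumes m: "0 < m" and r: "m / (2 + m) < r" "r < 1"
  shows "\<exists>t. 0 < t \<and> t < 1 \<and> 1 < t powr m + (1 - t^2) * (r / (1 - t * r))"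
proof -
  define h where "h = (\<lambda>t::real. t powr m + (1 - t^2) * (r / (1 - t * r)))"
  have "0 < m / (2 + m)" using m by simp
  then have r0: "0 < r" using r by linarith
  have "DERIV h 1 :> m - 2 * r / (1 - r)"
  proof -
    have d1: "DERIV (\<lambda>t. t powr m) 1 :> m * 1 powr (m - 1)"
      by (rule has_real_derivative_powr) simp
    have d2: "DERIV (\<lambda>t. 1 - t^2) 1 :> - 2"
      by (auto intro!: derivative_eq_intros)
    have d3: "DERIV (\<lambda>t. r * inverse (1 - t * r)) 1 :> r * (- (inverse (1 - 1 * r) * (0 - 1 * r) * inverse (1 - 1 * r)))"
      using r by (auto intro!: derivative_eq_intros)
    have "DERIV (\<lambda>t. t powr m + (1 - t^2) * (r * inverse (1 - t * r))) 1 :>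
      m * 1 powr (m - 1) + ((- 2) * (r * inverse (1 - 1 * r)) + r * (- (inverse (1 - 1 * r) * (0 - 1 * r) * inverse (1 - 1 * r))) * (1 - 1^2))"
      by (intro DERIV_add d1 DERIV_mult d2 d3)
    then show ?thesis unfolding h_def by (simp add: divide_inverse mult.assoc)
  qed
  moreover have "m - 2 * r / (1 - r) < 0"
  proof -
    have "m < r * (2 + m)" using r m by (simp add: divide_less_eq)
    then have "m * (1 - r) < 2 * r" by (simp add: algebra_simps)
    then show ?thesis using r by (simp add: field_simps)
  qed
  ultimately obtain d where d: "d > 0" "\<And>e. e > 0 \<Longrightarrow> e < d \<Longrightarrow> h 1 < h (1 - e)"
    using DERIV_neg_dec_left by blast
  define e where "e = min (d/2) (1/2)"
  have e: "e > 0" "e < d" "e \<le> 1/2" using d by (auto simp: e_def)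
  have "h 1 = 1" by (simp add: h_def)
  then have "1 < h (1 - e)" using d(2)[OF e(1,2)] by simp
  then show ?thesis using e by (intro exI[of _ "1 - e"]) (simp add: h_def)
qed

lemma emb_scale: "oemb I (complex_of_real c * w) = c *\<^sub>R oemb I w"
  by (simp add: oemb_def scaleR_add_right)

lemma opow_real: "opow (r *\<^sub>R oone) n = (r ^ n) *\<^sub>R oone"
  by (induction n) (simp_all add: omult_scale_left omult_scale_right)

lemma moeb_sums:
  fixes t :: real and z :: complex
  assumes t: "0 < t" "t < 1" and z: "cmod z < 1"
  defines "s \<equiv> (\<lambda>n. if n = 0 then t else - (1 - t^2) * t ^ (n - 1))"
  shows "(\<lambda>n. complex_of_real (s n) * z ^ n) sums ((of_real t - z) / (1 - of_real t * z))"
proof -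
  have "cmod (of_real t * z) = t * cmod z" using t by (simp add: norm_mult)
  also have "\<dots> < 1 * 1" using t z by (intro mult_strict_mono) auto
  finally have tz: "cmod (of_real t * z) < 1" by simp
  have den: "1 - of_real t * z \<noteq> 0" using tz by auto
  define q where "q = - complex_of_real (1 - t^2) * z"
  have "(\<lambda>n. (of_real t * z) ^ n) sums (1 / (1 - of_real t * z))" by (rule geometric_sums[OF tz])
  then have "(\<lambda>n. q * (of_real t * z) ^ n) sums (q * (1 / (1 - of_real t * z)))"
    by (rule sums_mult)
  moreover have feq: "(\<lambda>n. complex_of_real (s (Suc n)) * z ^ (Suc n)) = (\<lambda>n. q * (of_real t * z) ^ n)"
  proof (rule ext)
    fix n
    have "complex_of_real (s (Suc n)) = - complex_of_real (1 - t^2) * complex_of_real t ^ n"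
      by (simp add: s_def)
    then show "complex_of_real (s (Suc n)) * z ^ (Suc n) = q * (of_real t * z) ^ n"
      by (simp only: q_def power_mult_distrib power_Suc mult_ac)
  qed
  ultimately have "(\<lambda>n. complex_of_real (s (Suc n)) * z ^ (Suc n)) sums (q * (1 / (1 - of_real t * z)))"
    by (simp only:)
  then have "(\<lambda>n. complex_of_real (s n) * z ^ n) sums (q * (1 / (1 - of_real t * z)) + complex_of_real (s 0) * z ^ 0)"
    by (rule iffD1[OF sums_Suc_iff])
  moreover have "q * (1 / (1 - of_real t * z)) + complex_of_real (s 0) * z ^ 0 = (of_real t - z) / (1 - of_real t * z)"
  proof -
    have "q * (1 / (1 - of_real t * z)) + complex_of_real (s 0) * z ^ 0
        = (q + of_real t * (1 - of_real t * z)) / (1 - of_real t * z)"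
      using den by (simp add: s_def add_divide_distrib)
    also have "q + of_real t * (1 - of_real t * z) = of_real t - z"
      by (simp add: q_def algebra_simps power2_eq_square)
    finally show ?thesis .
  qed
  ultimately show ?thesis by (simp only:)
qed

lemma part2:
  fixes m r :: real
  assumes m: "0 < m" and r: "m / (2 + m) < r" "r < 1"
  shows "\<exists>a::nat \<Rightarrow> oct. \<exists>x::oct. slice_regular_ball a
                 \<and> (\<forall>y. norm y < 1 \<longrightarrow> norm (slice_series a y) \<le> 1)
                 \<and> norm x = r \<and> bohr_tail_summable a x \<and> bohr_sum m a x > 1"
proof -
  have "0 < m / (2 + m)" using m by simp
  then have r0: "0 < r" using r by linarith
  obtain t where t: "0 < t" "t < 1" and big: "1 < t powr m + (1 - t^2) * (r / (1 - t * r))"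
    using exists_t[OF m r] by blast
  define s where "s = (\<lambda>n. if n = 0 then t else - (1 - t^2) * t ^ (n - 1))"
  define a where "a = (\<lambda>n. s n *\<^sub>R oone)"
  define x where "x = r *\<^sub>R oone"
  have s1: "\<bar>s n\<bar> \<le> 1" for n
  proof (cases n)
    case 0 then show ?thesis using t by (simp add: s_def)
  next
    case (Suc k)
    have "(1 - t^2) * t ^ k \<le> 1 * 1"
      using t by (intro mult_mono) (simp_all add: power_le_one)
    moreover have "0 \<le> (1 - t^2) * t ^ k" using t by (simp add: power_le_one)
    moreover have sn: "s n = - ((1 - t^2) * t ^ k)" by (simp add: s_def Suc algebra_simps)
    ultimately show ?thesis unfolding sn abs_le_iff by linarith
  qed
  have trm: "omult (opow y n) (a n) = s n *\<^sub>R opow y n" for y n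
    by (simp add: a_def omult_scale_right)
  have SR: "slice_regular_ball a"
    unfolding slice_regular_ball_def
  proof (intro allI impI)
    fix y :: oct assume y: "norm y < 1"
    have le: "norm (omult (opow y n) (a n)) \<le> norm y ^ n" for n
    proof -
      have "norm (omult (opow y n) (a n)) = \<bar>s n\<bar> * norm y ^ n" unfolding trm by (simp add: norm_opow)
      also have "\<dots> \<le> 1 * norm y ^ n" by (rule mult_right_mono[OF s1]) simp
      finally show ?thesis by simp
    qed
    have "summable (\<lambda>n. norm y ^ n)" using y by simp
    then show "summable (\<lambda>n. omult (opow y n) (a n))"
      by (rule summable_comparison_test'[where N=0]) (rule le)
  qed
  have BD: "norm (slice_series a y) \<le> 1" if y: "norm y < 1" for y
  proof -
    obtain I z where I: "oimu I" and yz: "y = oemb I z" using oct_decomp by blast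
    have z: "cmod z < 1" using y yz norm_emb[OF I] by simp
    have "(\<lambda>n. complex_of_real (s n) * z ^ n) sums ((of_real t - z) / (1 - of_real t * z))"
      unfolding s_def by (rule moeb_sums[OF t z])
    then have "(\<lambda>n. oemb I (complex_of_real (s n) * z ^ n)) sums oemb I ((of_real t - z) / (1 - of_real t * z))"
      by (rule bounded_linear.sums[OF bl_emb])
    moreover have feq: "(\<lambda>n. oemb I (complex_of_real (s n) * z ^ n)) = (\<lambda>n. omult (opow y n) (a n))"
    proof (rule ext)
      fix n
      show "oemb I (complex_of_real (s n) * z ^ n) = omult (opow y n) (a n)"
        unfolding trm by (simp only: yz opow_emb[OF I] emb_scale)
    qed
    ultimately have "(\<lambda>n. omult (opow y n) (a n)) sums oemb I ((of_real t - z) / (1 - of_real t * z))"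
      by (simp only:)
    then have "slice_series a y = oemb I ((of_real t - z) / (1 - of_real t * z))"
      unfolding slice_series_def by (rule sums_unique[symmetric])
    then have "norm (slice_series a y) = cmod (of_real t - z) / cmod (1 - of_real t * z)"
      by (simp add: norm_emb[OF I] norm_divide)
    moreover have "cmod (z - of_real t) < cmod (1 - cnj (of_real t) * z)"
      by (rule moebius_lt[OF z]) (use t in simp)
    moreover have "cmod (of_real t - z) = cmod (z - of_real t)" by (rule norm_minus_commute)
    moreover have "0 < cmod (1 - of_real t * z)"
    proof -
      have "cmod (z - of_real t) < cmod (1 - of_real t * z)"
        using \<open>cmod (z - of_real t) < cmod (1 - cnj (of_real t) * z)\<close> by simp
      then show ?thesis using norm_ge_zero[of "z - of_real t"] by linarith
    qed
    ultimately show ?thesis by (simp add: divide_le_eq_1_pos)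
  qed
  have tl: "norm (omult (opow x (Suc k)) (a (Suc k))) = (1 - t^2) * r * (r * t) ^ k" for k
  proof -
    have "norm (omult (opow x (Suc k)) (a (Suc k))) = r ^ Suc k * \<bar>s (Suc k)\<bar>"
    proof -
      have nx: "norm x = r" using r0 by (simp add: x_def)
      show ?thesis unfolding trm norm_scaleR norm_opow nx by (rule mult.commute)
    qed
    also have "\<bar>s (Suc k)\<bar> = (1 - t^2) * t ^ k"
    proof -
      have "s (Suc k) = - ((1 - t^2) * t ^ k)" by (simp add: s_def algebra_simps)
      moreover have "0 \<le> (1 - t^2) * t ^ k" using t by (simp add: power_le_one)
      ultimately show ?thesis by simp
    qed
    finally show ?thesis by (simp add: power_mult_distrib)
  qed
  have "r * t < 1 * 1" using r0 r t by (intro mult_strict_mono) auto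
  then have rt: "norm (r * t) < 1" using r0 t by (simp add: abs_of_pos)
  have "(\<lambda>k. (r * t) ^ k) sums (1 / (1 - r * t))" by (rule geometric_sums[OF rt])
  then have "(\<lambda>k. ((1 - t^2) * r) * (r * t) ^ k) sums (((1 - t^2) * r) * (1 / (1 - r * t)))" by (rule sums_mult)
  moreover have "((1 - t^2) * r) * (1 / (1 - r * t)) = (1 - t^2) * (r / (1 - t * r))"
    by (simp add: mult.commute)
  ultimately have ts: "(\<lambda>k. norm (omult (opow x (Suc k)) (a (Suc k)))) sums ((1 - t^2) * (r / (1 - t * r)))"
    unfolding tl by (simp only:)
  have "bohr_sum m a x = t powr m + (1 - t^2) * (r / (1 - t * r))"
    using ts t by (simp add: bohr_sum_def a_def sums_iff s_def)
  then show ?thesis using SR BD ts big r0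
    by (intro exI[of _ a] exI[of _ x]) (auto simp: x_def bohr_tail_summable_def sums_iff abs_of_pos)
qed

theorem theorem1p1:
  fixes m :: real
  assumes "0 < m" and "m \<le> 2"
  shows "(\<forall>a::nat \<Rightarrow> oct. slice_regular_ball a
            \<longrightarrow> (\<forall>x. norm x < 1 \<longrightarrow> norm (slice_series a x) \<le> 1)
            \<longrightarrow> (\<forall>x::oct. norm x < 1 \<and> norm x \<le> m / (2 + m)
                   \<longrightarrow> bohr_tail_summable a x \<and> bohr_sum m a x \<le> 1))
       \<and> (\<forall>r::real. m / (2 + m) < r \<and> r < 1 \<longrightarrow>
            (\<exists>a::nat \<Rightarrow> oct. \<exists>x::oct. slice_regular_ball a
                 \<and> (\<forall>y. norm y < 1 \<longrightarrow> norm (slice_series a y) \<le> 1)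
                 \<and> norm x = r \<and> bohr_tail_summable a x \<and> bohr_sum m a x > 1))"
  using part1[OF assms] part2[OF assms(1)] by blast

end
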